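(* Let $t\geq 1$ be real with $C(t)>0$. Then $\chi(G)\geq \lfloor t\rfloor+1$.
   Context: Let $G$ be a simple graph with vertex set $V=\{1,\dots,n\}$, edge set $E$, adjacency matrix $A$ and chromatic number $\chi(G)$. Let $e$ denote the all-ones vector, $\langle M,N\rangle=\operatorname{trace}(M^TN)$, and $Y\geq 0$ mean entrywise nonnegativity. For real $t\geq 1$, $P(t)$ is the semidefinite program $$\min \tfrac12\langle A,Y\rangle \ \text{ s.t. } \begin{pmatrix} Y & e\\ e^T & t\end{pmatrix}\succeq 0,\ \operatorname{diag}(Y)=e,\ Y\geq 0,$$ over symmetric $n\times n$ matrices $Y$, and $C(t)$ denotes its optimal value. *)

theory Defs
  imports Complex_Main
begin

text \<open>Graphs on vertex set {1..n} given by an edge relation E; matrices are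
functions nat => nat => real, only entries indexed in the relevant index set matter.\<close>

definition simple_graph :: "nat \<Rightarrow> (nat \<Rightarrow> nat \<Rightarrow> bool) \<Rightarrow> bool" where
  "simple_graph n E \<longleftrightarrow> (\<forall>i\<in>{1..n}. \<forall>j\<in>{1..n}. E i j \<longleftrightarrow> E j i) \<and> (\<forall>i\<in>{1..n}. \<not> E i i)"

definition adj :: "(nat \<Rightarrow> nat \<Rightarrow> bool) \<Rightarrow> nat \<Rightarrow> nat \<Rightarrow> real" where
  "adj E i j = (if E i j then 1 else 0)"

definition chromatic_number :: "nat \<Rightarrow> (nat \<Rightarrow> nat \<Rightarrow> bool) \<Rightarrow> nat" where
  "chromatic_number n E = (LEAST k. \<exists>c :: nat \<Rightarrow> nat.
      (\<forall>i\<in>{1..n}. c i < k) \<and> (\<forall>i\<in>{1..n}. \<forall>j\<in>{1..n}. E i j \<longrightarrow> c i \<noteq> c j))"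

definition psd_on :: "nat set \<Rightarrow> (nat \<Rightarrow> nat \<Rightarrow> real) \<Rightarrow> bool" where
  "psd_on I M \<longleftrightarrow> (\<forall>i\<in>I. \<forall>j\<in>I. M i j = M j i) \<and>
     (\<forall>x :: nat \<Rightarrow> real. 0 \<le> (\<Sum>i\<in>I. \<Sum>j\<in>I. x i * M i j * x j))"

text \<open>The bordered matrix [[Y, e], [e^T, t]] indexed by {1..n+1}.\<close>
definition bordered :: "nat \<Rightarrow> (nat \<Rightarrow> nat \<Rightarrow> real) \<Rightarrow> real \<Rightarrow> nat \<Rightarrow> nat \<Rightarrow> real" where
  "bordered n Y t i j = (if i \<le> n \<and> j \<le> n then Y i j else if i \<le> n \<or> j \<le> n then 1 else t)"

definition sdp_feasible :: "nat \<Rightarrow> real \<Rightarrow> (nat \<Rightarrow> nat \<Rightarrow> real) \<Rightarrow> bool" where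
  "sdp_feasible n t Y \<longleftrightarrow>
     (\<forall>i\<in>{1..n}. \<forall>j\<in>{1..n}. Y i j = Y j i) \<and>
     psd_on {1..Suc n} (bordered n Y t) \<and>
     (\<forall>i\<in>{1..n}. Y i i = 1) \<and>
     (\<forall>i\<in>{1..n}. \<forall>j\<in>{1..n}. 0 \<le> Y i j)"

definition sdp_objective :: "nat \<Rightarrow> (nat \<Rightarrow> nat \<Rightarrow> bool) \<Rightarrow> (nat \<Rightarrow> nat \<Rightarrow> real) \<Rightarrow> real" where
  "sdp_objective n E Y = (1/2) * (\<Sum>i\<in>{1..n}. \<Sum>j\<in>{1..n}. adj E i j * Y i j)"

text \<open>Optimal value C(t) of P(t) (the minimum is attained: feasible set is compact and nonempty for t >= 1).\<close>
definition sdp_value :: "nat \<Rightarrow> (nat \<Rightarrow> nat \<Rightarrow> bool) \<Rightarrow> real \<Rightarrow> real" where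
  "sdp_value n E t = Inf {sdp_objective n E Y | Y. sdp_feasible n t Y}"

end

theory Submission
  imports Defs "HOL-Analysis.Analysis"
begin

lemma color_feasible:
  fixes n k :: nat and c :: "nat \<Rightarrow> nat" and t :: real
  assumes ck: "\<forall>i\<in>{1..n}. c i < k" and tk: "real k \<le> t" and t1: "t \<ge> 1"
  shows "sdp_feasible n t (\<lambda>i j. if c i = c j then 1 else 0)"
proof -
  define Y where "Y = (\<lambda>i j. if c i = c j then 1 else (0::real))"
  have "0 \<le> (\<Sum>i\<in>{1..Suc n}. \<Sum>j\<in>{1..Suc n}. x i * bordered n Y t i j * x j)" for x :: "nat \<Rightarrow> real"
  proof -
    define s where "s = x (Suc n)"
    define S where "S a = (\<Sum>i\<in>{i\<in>{1..n}. c i = a}. x i)" for a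
    define T where "T = (\<Sum>i\<in>{1..n}. x i)"
    define A where "A = (\<Sum>i\<in>{1..n}. \<Sum>j\<in>{1..n}. x i * Y i j * x j)"
    have Q: "(\<Sum>i\<in>{1..Suc n}. \<Sum>j\<in>{1..Suc n}. x i * bordered n Y t i j * x j)
        = A + 2 * s * T + t * s^2"
    proof -
      have inner: "(\<Sum>j\<in>{1..Suc n}. x i * bordered n Y t i j * x j)
           = (\<Sum>j\<in>{1..n}. x i * Y i j * x j) + x i * s" if "i \<in> {1..n}" for i
      proof -
        have "(\<Sum>j\<in>{1..n}. x i * bordered n Y t i j * x j) = (\<Sum>j\<in>{1..n}. x i * Y i j * x j)"
          by (rule sum.cong) (use that in \<open>auto simp: bordered_def\<close>)
        then show ?thesis using that by (simp add: sum.cl_ivl_Suc bordered_def s_def)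
      qed
      have last: "(\<Sum>j\<in>{1..Suc n}. x (Suc n) * bordered n Y t (Suc n) j * x j)
           = s * T + t * s^2"
        by (simp add: sum.cl_ivl_Suc bordered_def s_def T_def sum_distrib_left power2_eq_square)
      have "(\<Sum>i\<in>{1..Suc n}. \<Sum>j\<in>{1..Suc n}. x i * bordered n Y t i j * x j)
          = (\<Sum>i\<in>{1..n}. \<Sum>j\<in>{1..Suc n}. x i * bordered n Y t i j * x j) + (s * T + t * s^2)"
        using last by (simp add: sum.cl_ivl_Suc)
      also have "(\<Sum>i\<in>{1..n}. \<Sum>j\<in>{1..Suc n}. x i * bordered n Y t i j * x j)
          = (\<Sum>i\<in>{1..n}. (\<Sum>j\<in>{1..n}. x i * Y i j * x j) + x i * s)"
        by (rule sum.cong[OF refl], rule inner, assumption)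
      also have "\<dots> = A + s * T"
        by (simp add: sum.distrib A_def T_def sum_distrib_left mult.commute)
      finally show ?thesis by simp
    qed
    have Yexp: "Y i j = (\<Sum>a<k. (if c i = a then 1 else 0) * (if c j = a then 1 else 0))"
      if "i \<in> {1..n}" for i j
    proof -
      have "(\<Sum>a<k. (if c i = a then 1 else 0) * (if c j = a then (1::real) else 0))
          = (\<Sum>a\<in>{c i}. (if c j = a then 1 else 0))"
        by (rule sum.mono_neutral_cong_right) (use that ck in auto)
      then show ?thesis by (simp add: Y_def)
    qed
    have AS: "A = (\<Sum>a<k. (S a)^2)"
    proof -
      have trm: "x i * Y i j * x j = (\<Sum>a<k. (if c i = a then x i else 0) * (if c j = a then x j else 0))"
        if "i \<in> {1..n}" for i j
      proof -
        have "x i * Y i j * x j = (\<Sum>a<k. x i * ((if c i = a then 1 else 0) * (if c j = a then 1 else 0)) * x j)"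
          by (simp only: Yexp[OF that] sum_distrib_left sum_distrib_right)
        also have "\<dots> = (\<Sum>a<k. (if c i = a then x i else 0) * (if c j = a then x j else 0))"
          by (rule sum.cong) auto
        finally show ?thesis .
      qed
      have "A = (\<Sum>i\<in>{1..n}. \<Sum>j\<in>{1..n}. \<Sum>a<k. (if c i = a then x i else 0) * (if c j = a then x j else 0))"
        unfolding A_def
        by (rule sum.cong[OF refl], rule sum.cong[OF refl], rule trm, assumption)
      also have "\<dots> = (\<Sum>a<k. \<Sum>i\<in>{1..n}. \<Sum>j\<in>{1..n}. (if c i = a then x i else 0) * (if c j = a then x j else 0))"
      proof -
        have "(\<Sum>i\<in>{1..n}. \<Sum>j\<in>{1..n}. \<Sum>a<k. (if c i = a then x i else 0) * (if c j = a then x j else 0))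
          = (\<Sum>i\<in>{1..n}. \<Sum>a<k. \<Sum>j\<in>{1..n}. (if c i = a then x i else 0) * (if c j = a then x j else 0))"
          by (rule sum.cong[OF refl], rule sum.swap)
        also have "\<dots> = (\<Sum>a<k. \<Sum>i\<in>{1..n}. \<Sum>j\<in>{1..n}. (if c i = a then x i else 0) * (if c j = a then x j else 0))"
          by (rule sum.swap)
        finally show ?thesis .
      qed
      also have "\<dots> = (\<Sum>a<k. (S a)^2)"
      proof (rule sum.cong[OF refl])
        fix a
        have Sa: "S a = (\<Sum>i\<in>{1..n}. if c i = a then x i else 0)"
          unfolding S_def by (simp add: sum.inter_filter[symmetric])
        show "(\<Sum>i\<in>{1..n}. \<Sum>j\<in>{1..n}. (if c i = a then x i else 0) * (if c j = a then x j else 0)) = (S a)^2"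
          by (simp add: Sa power2_eq_square sum_product)
      qed
      finally show ?thesis .
    qed
    have TS: "T = (\<Sum>a<k. S a)"
      unfolding T_def S_def
      by (rule sum.group[symmetric]) (use ck in auto)
    have CS: "T^2 \<le> real k * A"
    proof -
      have "(\<Sum>a<k. S a * 1)^2 \<le> (\<Sum>a<k. (S a)^2) * (\<Sum>a<k. (1::real)^2)"
        by (rule Cauchy_Schwarz_ineq_sum)
      then show ?thesis by (simp add: TS AS mult.commute)
    qed
    have A0: "A \<ge> 0" unfolding AS by (simp add: sum_nonneg)
    show ?thesis
    proof (cases "k = 0")
      case True
      then have "T = 0" using CS by simp
      then show ?thesis using Q A0 t1 by simp
    next
      case False
      then have kpos: "real k > 0" by simp
      have "real k * (A + 2 * s * T + t * s^2) \<ge> T^2 + 2 * real k * s * T + real k * real k * s^2"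
      proof -
        have "real k * (t * s^2) \<ge> real k * (real k * s^2)"
          using tk kpos by (intro mult_left_mono mult_right_mono) auto
        then show ?thesis using CS by (simp add: algebra_simps)
      qed
      moreover have "T^2 + 2 * real k * s * T + real k * real k * s^2 = (T + real k * s)^2"
        by (simp add: power2_eq_square algebra_simps)
      ultimately have "real k * (A + 2 * s * T + t * s^2) \<ge> 0"
        by (metis zero_le_power2 order_trans)
      then have "A + 2 * s * T + t * s^2 \<ge> 0"
        using kpos by (simp add: zero_le_mult_iff)
      then show ?thesis using Q by simp
    qed
  qed
  moreover have "\<forall>i\<in>{1..Suc n}. \<forall>j\<in>{1..Suc n}. bordered n Y t i j = bordered n Y t j i"
    by (auto simp: bordered_def Y_def)
  ultimately have "psd_on {1..Suc n} (bordered n Y t)" unfolding psd_on_def by blast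
  then show ?thesis unfolding sdp_feasible_def Y_def[symmetric] by (auto simp: Y_def)
qed

theorem mainTheorem4:
  fixes n :: nat and E :: "nat \<Rightarrow> nat \<Rightarrow> bool" and t :: real
  assumes "simple_graph n E"
    and "t \<ge> 1"
    and "sdp_value n E t > 0"
  shows "real (chromatic_number n E) \<ge> of_int \<lfloor>t\<rfloor> + 1"
proof (rule ccontr)
  assume "\<not> ?thesis"
  then have lt: "real (chromatic_number n E) < of_int \<lfloor>t\<rfloor> + 1" by simp
  define k where "k = chromatic_number n E"
  have ex: "\<exists>c :: nat \<Rightarrow> nat. (\<forall>i\<in>{1..n}. c i < Suc n) \<and> (\<forall>i\<in>{1..n}. \<forall>j\<in>{1..n}. E i j \<longrightarrow> c i \<noteq> c j)"
    using assms(1) by (intro exI[of _ "\<lambda>i. i"]) (auto simp: simple_graph_def)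
  have "\<exists>c :: nat \<Rightarrow> nat. (\<forall>i\<in>{1..n}. c i < k) \<and> (\<forall>i\<in>{1..n}. \<forall>j\<in>{1..n}. E i j \<longrightarrow> c i \<noteq> c j)"
    unfolding k_def chromatic_number_def by (rule LeastI[of _ "Suc n"]) (rule ex)
  then obtain c :: "nat \<Rightarrow> nat" where ck: "\<forall>i\<in>{1..n}. c i < k"
    and cp: "\<forall>i\<in>{1..n}. \<forall>j\<in>{1..n}. E i j \<longrightarrow> c i \<noteq> c j"
    by blast
  have "of_int (int k) < of_int \<lfloor>t\<rfloor> + (1::real)" using lt by (simp add: k_def)
  then have "int k < \<lfloor>t\<rfloor> + 1" by (metis of_int_1 of_int_add of_int_less_iff)
  then have "int k \<le> \<lfloor>t\<rfloor>" by simp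
  then have "of_int (int k) \<le> t" by (simp only: le_floor_iff)
  then have tk: "real k \<le> t" by simp
  define Y where "Y = (\<lambda>i j. if c i = c j then 1 else (0::real))"
  have feas: "sdp_feasible n t Y" unfolding Y_def by (rule color_feasible[OF ck tk assms(2)])
  have obj: "sdp_objective n E Y = 0"
    unfolding sdp_objective_def using cp
    by (auto simp: adj_def Y_def intro!: sum.neutral)
  have nonneg: "sdp_objective n E Z \<ge> 0" if "sdp_feasible n t Z" for Z
    using that unfolding sdp_objective_def sdp_feasible_def
    by (auto intro!: sum_nonneg mult_nonneg_nonneg simp: adj_def)
  have "sdp_value n E t \<le> 0"
  proof -
    have mem: "0 \<in> {sdp_objective n E Y | Y. sdp_feasible n t Y}"
      using feas obj by (metis (mono_tags, lifting) mem_Collect_eq)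
    have bdd: "bdd_below {sdp_objective n E Y | Y. sdp_feasible n t Y}"
      by (rule bdd_belowI[of _ 0]) (use nonneg in blast)
    show ?thesis unfolding sdp_value_def by (rule cInf_lower[OF mem bdd])
  qed
  then show False using assms(3) by simp
qed

end
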